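(* Let $M$, $P$, $P'$, $H^{(j)}(\lambda)$, $S$, $U_S$, $Z_a$, $X'_a$ and $Q$ be as in the context. Then $Q$ restricts to $S$, i.e. for every point $p\in S$ and every covector $\alpha\in T^*_pM$ one has $Q(\alpha)\in T_pS$; equivalently $\langle dH^{(b)}_0, Q(\alpha)\rangle=0$ for all $\alpha$ and $b=1,\dots,k$. Moreover all the Hamiltonians $H^{(a)}_l$ are in involution with respect to $Q$: \[ \{H^{(a)}_l,H^{(b)}_m\}_Q:=\langle dH^{(a)}_l, Q\, dH^{(b)}_m\rangle=0 \] for all $a,b\in\{1,\dots,k\}$, $0\le l\le n_a$, $0\le m\le n_b$.
   Context: $M$ is a smooth manifold of dimension $2n+k$ carrying two Poisson tensors $P,P'$ which are compatible, i.e. $P_\lambda=P'-\lambda P$ is a Poisson tensor for every $\lambda$; brackets are $\{f,g\}=\langle df,P\,dg\rangle$, $\{f,g\}'=\langle df,P'dg\rangle$, and a bivector is viewed as a map $T^*M\to TM$. There are $k$ polynomial Casimirs of the pencil $H^{(j)}(\lambda)=\sum_{i=0}^{n_j}H^{(j)}_i\lambda^{n_j-i}$, $j=1,\dots,k$, i.e. $(P'-\lambda P)\,dH^{(j)}(\lambda)=0$ identically in $\lambda$, with $n_1+\dots+n_k=n$ and the differentials $dH^{(j)}_s$ ($j=1,\dots,k$, $s=0,\dots,n_j$) linearly independent at every point. In particular $PdH^{(j)}_0=0$, $P'dH^{(j)}_{n_j}=0$ and $P\,dH^{(j)}_{s+1}=P'dH^{(j)}_s$. $S$ is a symplectic leaf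 of $P$, locally a common level set of $H^{(1)}_0,\dots,H^{(k)}_0$, and $U_S$ is a tubular neighbourhood of $S$. On $U_S$ there are vector fields $Z_1,\dots,Z_k$ spanning a distribution $\mathcal Z$ with $TM=T S'\oplus\mathcal Z$ along each leaf $S'$ of $P$ in $U_S$, normalized by $Z_a(H^{(b)}_0)=\delta_a^b$. Set $X'_a=P'dH^{(a)}_0$ and define the bivector \[ Q=P'-\sum_{a=1}^k X'_a\wedge Z_a,\qquad\text{i.e. } Q(\alpha)=P'(\alpha)+\sum_{a=1}^k\big(\langle\alpha,X'_a\rangle Z_a-\langle\alpha,Z_a\rangle X'_a\big). \] *)

theory Defs
  imports "HOL-Analysis.Analysis"
begin

text \<open>Local model: the (tubular neighbourhood of the) manifold is an open set U of a
Euclidean space 'a.  Tangent vectors are elements of 'a, covectors are linear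
functionals 'a \<Rightarrow> real, the pairing is application.  A bivector field is a map
P :: 'a \<Rightarrow> ('a \<Rightarrow> real) \<Rightarrow> 'a (covector \<mapsto> vector at each point).\<close>

definition dfun :: "('a::euclidean_space \<Rightarrow> real) \<Rightarrow> 'a \<Rightarrow> ('a \<Rightarrow> real)" where
  "dfun f x = frechet_derivative f (at x)"

coinductive smooth_on :: "'a::euclidean_space set \<Rightarrow> ('a \<Rightarrow> real) \<Rightarrow> bool" for U where
  "f differentiable_on U \<Longrightarrow> (\<And>v. smooth_on U (\<lambda>x. dfun f x v)) \<Longrightarrow> smooth_on U f"

definition pbr :: "('a::euclidean_space \<Rightarrow> ('a \<Rightarrow> real) \<Rightarrow> 'a) \<Rightarrow> ('a \<Rightarrow> real) \<Rightarrow> ('a \<Rightarrow> real) \<Rightarrow> 'a \<Rightarrow> real" where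
  "pbr P f g x = dfun f x (P x (dfun g x))"

definition bivector_on :: "'a::euclidean_space set \<Rightarrow> ('a \<Rightarrow> ('a \<Rightarrow> real) \<Rightarrow> 'a) \<Rightarrow> bool" where
  "bivector_on U P \<longleftrightarrow>
     (\<forall>x\<in>U. \<forall>\<alpha> \<beta>. linear \<alpha> \<longrightarrow> linear \<beta> \<longrightarrow>
        (\<forall>a b. P x (\<lambda>v. a * \<alpha> v + b * \<beta> v) = a *\<^sub>R P x \<alpha> + b *\<^sub>R P x \<beta>) \<and>
        \<alpha> (P x \<beta>) = - \<beta> (P x \<alpha>)) \<and>
     (\<forall>f g. smooth_on U f \<longrightarrow> smooth_on U g \<longrightarrow> smooth_on U (pbr P f g))"

definition poisson_on :: "'a::euclidean_space set \<Rightarrow> ('a \<Rightarrow> ('a \<Rightarrow> real) \<Rightarrow> 'a) \<Rightarrow> bool" where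
  "poisson_on U P \<longleftrightarrow> bivector_on U P \<and>
     (\<forall>f g h. smooth_on U f \<longrightarrow> smooth_on U g \<longrightarrow> smooth_on U h \<longrightarrow>
        (\<forall>x\<in>U. pbr P f (pbr P g h) x + pbr P g (pbr P h f) x + pbr P h (pbr P f g) x = 0))"

definition pencil :: "('a::euclidean_space \<Rightarrow> ('a \<Rightarrow> real) \<Rightarrow> 'a) \<Rightarrow> ('a \<Rightarrow> ('a \<Rightarrow> real) \<Rightarrow> 'a) \<Rightarrow> real \<Rightarrow> 'a \<Rightarrow> ('a \<Rightarrow> real) \<Rightarrow> 'a" where
  "pencil P' P lam x \<alpha> = P' x \<alpha> - lam *\<^sub>R P x \<alpha>"

definition dHpoly :: "(nat \<Rightarrow> nat \<Rightarrow> 'a::euclidean_space \<Rightarrow> real) \<Rightarrow> (nat \<Rightarrow> nat) \<Rightarrow> nat \<Rightarrow> real \<Rightarrow> 'a \<Rightarrow> ('a \<Rightarrow> real)" where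
  "dHpoly H nn j lam x = (\<lambda>v. \<Sum>i\<le>nn j. lam ^ (nn j - i) * dfun (H j i) x v)"

text \<open>The modified bivector Q = P' - sum_a X'_a wedge Z_a, with X'_a = P' dH^(a)_0.\<close>
definition Qbiv :: "('a::euclidean_space \<Rightarrow> ('a \<Rightarrow> real) \<Rightarrow> 'a) \<Rightarrow> (nat \<Rightarrow> nat \<Rightarrow> 'a \<Rightarrow> real)
     \<Rightarrow> (nat \<Rightarrow> 'a \<Rightarrow> 'a) \<Rightarrow> nat \<Rightarrow> 'a \<Rightarrow> ('a \<Rightarrow> real) \<Rightarrow> 'a" where
  "Qbiv P' H Z k x \<alpha> =
     P' x \<alpha> + (\<Sum>a=1..k. \<alpha> (P' x (dfun (H a 0) x)) *\<^sub>R Z a x - \<alpha> (Z a x) *\<^sub>R P' x (dfun (H a 0) x))"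

end

theory Submission
  imports Defs
begin

lemma rev_atMost: "(\<Sum>i\<le>(n::nat). g (n - i)) = (\<Sum>i\<le>n. g i)"
  by (rule sum.reindex_bij_witness[where i="\<lambda>i. n - i" and j="\<lambda>i. n - i"]) auto

lemma dfun_linear:
  assumes "smooth_on U f" "open U" "x \<in> U"
  shows "linear (dfun f x)"
proof -
  from assms(1) have "f differentiable_on U" by (cases rule: smooth_on.cases) auto
  then have "f differentiable (at x)" using assms
    by (metis at_within_open differentiable_on_def)
  then have "(f has_derivative dfun f x) (at x)"
    unfolding dfun_def by (rule frechet_derivative_works[THEN iffD1])
  then show ?thesis using has_derivative_linear by blast
qed

lemma lin_cmul: "linear (f::'a::real_vector \<Rightarrow> real) \<Longrightarrow> linear (\<lambda>v. c * f v)"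
  using linear_compose_scale_right[of f c] by simp

lemma biv_lin:
  assumes "bivector_on U P" "x \<in> U" "linear \<alpha>" "linear \<beta>"
  shows "P x (\<lambda>v. a * \<alpha> v + b * \<beta> v) = a *\<^sub>R P x \<alpha> + b *\<^sub>R P x \<beta>"
proof -
  have "\<forall>x\<in>U. \<forall>\<alpha> \<beta>. linear \<alpha> \<longrightarrow> linear \<beta> \<longrightarrow>
        (\<forall>a b. P x (\<lambda>v. a * \<alpha> v + b * \<beta> v) = a *\<^sub>R P x \<alpha> + b *\<^sub>R P x \<beta>) \<and>
        \<alpha> (P x \<beta>) = - \<beta> (P x \<alpha>)" using assms(1) unfolding bivector_on_def by (rule conjunct1)
  then have "linear \<alpha> \<longrightarrow> linear \<beta> \<longrightarrow> (\<forall>a b. P x (\<lambda>v. a * \<alpha> v + b * \<beta> v) = a *\<^sub>R P x \<alpha> + b *\<^sub>R P x \<beta>)" using assms(2) by blast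
  then show ?thesis using assms(3,4) by blast
qed

lemma biv_sum:
  assumes "bivector_on U P" "x \<in> U" "finite I" "\<forall>i\<in>I. linear (\<alpha> i)"
  shows "P x (\<lambda>v. \<Sum>i\<in>I. c i * \<alpha> i v) = (\<Sum>i\<in>I. c i *\<^sub>R P x (\<alpha> i))"
  using assms(3,4)
proof (induction I rule: finite_induct)
  case empty
  have l0: "linear (\<lambda>v::'a. 0::real)" by (simp add: linear_zero)
  have "P x (\<lambda>v. 0 * 0 + 0 * 0) = 0 *\<^sub>R P x (\<lambda>v. 0) + 0 *\<^sub>R P x (\<lambda>v. 0)"
    by (rule biv_lin[OF assms(1,2) l0 l0])
  then show ?case by simp
next
  case (insert i F)
  have li: "linear (\<alpha> i)" using insert by auto
  have lF: "linear (\<lambda>v. \<Sum>i\<in>F. c i * \<alpha> i v)"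
    using insert by (auto intro!: linear_compose_sum lin_cmul)
  have "P x (\<lambda>v. c i * \<alpha> i v + 1 * (\<Sum>i\<in>F. c i * \<alpha> i v)) = c i *\<^sub>R P x (\<alpha> i) + 1 *\<^sub>R P x (\<lambda>v. \<Sum>i\<in>F. c i * \<alpha> i v)"
    by (rule biv_lin[OF assms(1,2) li lF])
  then show ?case using insert by simp
qed
lemma coeff_extract:
  fixes A B :: "nat \<Rightarrow> 'a::real_inner"
  assumes h: "\<forall>lam::real. (\<Sum>i\<le>n. lam^(n-i) *\<^sub>R A i) - lam *\<^sub>R (\<Sum>i\<le>n. lam^(n-i) *\<^sub>R B i) = 0"
  shows "B 0 = 0 \<and> A n = 0 \<and> (\<forall>s<n. A s = B (Suc s))"
proof -
  have key: "B 0 \<bullet> u = 0 \<and> A n \<bullet> u = 0 \<and> (\<forall>s<n. (A s - B (Suc s)) \<bullet> u = 0)" for u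
  proof -
    define a where "a i = A i \<bullet> u" for i
    define b where "b i = B i \<bullet> u" for i
    define c where "c d = (if d \<le> n then a (n - d) else 0) - (if 1 \<le> d then b (Suc n - d) else 0)" for d
    have e1: "(\<Sum>i\<le>n. lam^(n-i) * a i) - lam * (\<Sum>i\<le>n. lam^(n-i) * b i) = 0" for lam :: real
    proof -
      have "((\<Sum>i\<le>n. lam^(n-i) *\<^sub>R A i) - lam *\<^sub>R (\<Sum>i\<le>n. lam^(n-i) *\<^sub>R B i)) \<bullet> u = 0"
        using h by simp
      then show ?thesis
        by (simp add: a_def b_def inner_diff_left inner_sum_left)
    qed
    have e2: "(\<Sum>d\<le>Suc n. c d * lam^d) = (\<Sum>i\<le>n. lam^(n-i) * a i) - lam * (\<Sum>i\<le>n. lam^(n-i) * b i)" for lam :: real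
    proof -
      have s1: "(\<Sum>d\<le>Suc n. (if d \<le> n then a (n - d) else 0) * lam^d) = (\<Sum>i\<le>n. lam^(n-i) * a i)"
      proof -
        have "(\<Sum>d\<le>Suc n. (if d \<le> n then a (n - d) else 0) * lam^d) = (\<Sum>d\<le>n. a (n - d) * lam^d)"
          by (simp add: sum.atMost_Suc)
        also have "\<dots> = (\<Sum>d\<le>n. a (n - (n - d)) * lam^(n - d))"
          by (rule rev_atMost[symmetric, where g="\<lambda>d. a (n - d) * lam^d"])
        also have "\<dots> = (\<Sum>i\<le>n. lam^(n-i) * a i)"
          by (intro sum.cong) auto
        finally show ?thesis .
      qed
      have s2: "(\<Sum>d\<le>Suc n. (if 1 \<le> d then b (Suc n - d) else 0) * lam^d) = lam * (\<Sum>i\<le>n. lam^(n-i) * b i)"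
      proof -
        have "(\<Sum>d\<le>Suc n. (if 1 \<le> d then b (Suc n - d) else 0) * lam^d) = (\<Sum>d\<le>n. b (n - d) * lam^(Suc d))"
          by (subst sum.atMost_Suc_shift) simp
        also have "\<dots> = (\<Sum>d\<le>n. b (n - (n - d)) * lam^(Suc (n - d)))"
          by (rule rev_atMost[symmetric, where g="\<lambda>d. b (n - d) * lam^(Suc d)"])
        also have "\<dots> = lam * (\<Sum>i\<le>n. lam^(n-i) * b i)"
          by (simp add: sum_distrib_left algebra_simps)
        finally show ?thesis .
      qed
      show ?thesis unfolding c_def using s1 s2 by (simp add: left_diff_distrib sum_subtractf)
    qed
    have "\<forall>lam::real. (\<Sum>d\<le>Suc n. c d * lam^d) = 0" using e1 e2 by simp
    then have cz: "\<forall>d\<le>Suc n. c d = 0" using polyfun_eq_0[of c "Suc n"] by blast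
    have "b 0 = 0" using cz[rule_format, of "Suc n"] by (simp add: c_def)
    moreover have "a n = 0" using cz[rule_format, of 0] by (simp add: c_def)
    moreover have "\<forall>s<n. a s - b (Suc s) = 0"
    proof (intro allI impI)
      fix s assume "s < n"
      then show "a s - b (Suc s) = 0" using cz[rule_format, of "n - s"] by (simp add: c_def Suc_diff_le)
    qed
    ultimately show ?thesis by (simp add: a_def b_def inner_diff_left)
  qed
  have "B 0 = 0" using key[of "B 0"] by simp
  moreover have "A n = 0" using key[of "A n"] by simp
  moreover have "\<forall>s<n. A s = B (Suc s)" using key by (metis inner_eq_zero_iff right_minus_eq)
  ultimately show ?thesis by blast
qed
lemma biv_skew:
  assumes "bivector_on U P" "x \<in> U" "linear \<alpha>" "linear \<beta>"
  shows "\<alpha> (P x \<beta>) = - \<beta> (P x \<alpha>)"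
proof -
  have "\<forall>x\<in>U. \<forall>\<alpha> \<beta>. linear \<alpha> \<longrightarrow> linear \<beta> \<longrightarrow>
        (\<forall>a b. P x (\<lambda>v. a * \<alpha> v + b * \<beta> v) = a *\<^sub>R P x \<alpha> + b *\<^sub>R P x \<beta>) \<and>
        \<alpha> (P x \<beta>) = - \<beta> (P x \<alpha>)" using assms(1) unfolding bivector_on_def by (rule conjunct1)
  then have "linear \<alpha> \<longrightarrow> linear \<beta> \<longrightarrow> \<alpha> (P x \<beta>) = - \<beta> (P x \<alpha>)" using assms(2) by blast
  then show ?thesis using assms(3,4) by blast
qed

theorem theorem1:
  fixes U :: "'a::euclidean_space set"
    and P P' :: "'a \<Rightarrow> ('a \<Rightarrow> real) \<Rightarrow> 'a"
    and H :: "nat \<Rightarrow> nat \<Rightarrow> 'a \<Rightarrow> real"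
    and nn :: "nat \<Rightarrow> nat"
    and k n :: nat
    and Z :: "nat \<Rightarrow> 'a \<Rightarrow> 'a"
    and c :: "nat \<Rightarrow> real"
    and S :: "'a set"
  assumes U_open: "open U"
    and dim: "DIM('a) = 2 * n + k"
    and n_sum: "(\<Sum>j=1..k. nn j) = n"
    and P_poisson: "poisson_on U P"
    and P'_poisson: "poisson_on U P'"
    and compatible: "\<forall>lam. poisson_on U (pencil P' P lam)"
    and H_smooth: "\<forall>j\<in>{1..k}. \<forall>s\<le>nn j. smooth_on U (H j s)"
    and casimir: "\<forall>j\<in>{1..k}. \<forall>x\<in>U. \<forall>lam.
                    pencil P' P lam x (dHpoly H nn j lam x) = 0"
    and indep: "\<forall>x\<in>U. \<forall>coef :: nat \<Rightarrow> nat \<Rightarrow> real.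
                  (\<forall>v. (\<Sum>j=1..k. \<Sum>s\<le>nn j. coef j s * dfun (H j s) x v) = 0) \<longrightarrow>
                  (\<forall>j\<in>{1..k}. \<forall>s\<le>nn j. coef j s = 0)"
    and leaves: "\<forall>x\<in>U. {P x \<alpha> | \<alpha>. linear \<alpha>} = {v. \<forall>b\<in>{1..k}. dfun (H b 0) x v = 0}"
    and S_def: "S = {p\<in>U. \<forall>b\<in>{1..k}. H b 0 p = c b}"
    and Z_smooth: "\<forall>a\<in>{1..k}. \<forall>f. smooth_on U f \<longrightarrow> smooth_on U (\<lambda>x. dfun f x (Z a x))"
    and Z_transversal: "\<forall>x\<in>U. \<forall>v. \<exists>!coef :: nat \<Rightarrow> real.
                  (\<forall>a. a \<notin> {1..k} \<longrightarrow> coef a = 0) \<and>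
                  (\<forall>b\<in>{1..k}. dfun (H b 0) x (v - (\<Sum>a=1..k. coef a *\<^sub>R Z a x)) = 0)"
    and Z_norm: "\<forall>x\<in>U. \<forall>a\<in>{1..k}. \<forall>b\<in>{1..k}.
                  dfun (H b 0) x (Z a x) = (if a = b then 1 else 0)"
  shows "(\<forall>p\<in>S. \<forall>\<alpha>. linear \<alpha> \<longrightarrow> (\<forall>b\<in>{1..k}. dfun (H b 0) p (Qbiv P' H Z k p \<alpha>) = 0))
       \<and> (\<forall>x\<in>U. \<forall>a\<in>{1..k}. \<forall>b\<in>{1..k}. \<forall>l\<le>nn a. \<forall>m\<le>nn b.
            dfun (H a l) x (Qbiv P' H Z k x (dfun (H b m) x)) = 0)"
proof -
  let ?D = "\<lambda>j s x. dfun (H j s) x"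
  have bP: "bivector_on U P" using P_poisson by (simp add: poisson_on_def)
  have bP': "bivector_on U P'" using P'_poisson by (simp add: poisson_on_def)
  have lin: "linear (?D j s x)" if "x \<in> U" "j \<in> {1..k}" "s \<le> nn j" for j s x
  proof -
    have "smooth_on U (H j s)" using H_smooth that by simp
    then show ?thesis using dfun_linear U_open that(1) by blast
  qed
  have skP: "\<alpha> (P x \<beta>) = - \<beta> (P x \<alpha>)" if "x \<in> U" "linear \<alpha>" "linear \<beta>" for x \<alpha> \<beta>
    using biv_skew[OF bP that] .
  have skP': "\<alpha> (P' x \<beta>) = - \<beta> (P' x \<alpha>)" if "x \<in> U" "linear \<alpha>" "linear \<beta>" for x \<alpha> \<beta>
    using biv_skew[OF bP' that] .
  have K: "P x (?D j 0 x) = 0 \<and> P' x (?D j (nn j) x) = 0 \<and> (\<forall>s<nn j. P' x (?D j s x) = P x (?D j (Suc s) x))"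
    if x: "x \<in> U" and j: "j \<in> {1..k}" for x j
  proof -
    have li: "\<forall>i\<in>{..nn j}. linear (?D j i x)" using lin x j by auto
    have "\<forall>lam::real. (\<Sum>i\<le>nn j. lam^(nn j-i) *\<^sub>R P' x (?D j i x)) - lam *\<^sub>R (\<Sum>i\<le>nn j. lam^(nn j-i) *\<^sub>R P x (?D j i x)) = 0"
    proof
      fix lam :: real
      have "pencil P' P lam x (dHpoly H nn j lam x) = 0" using casimir x j by blast
      then show "(\<Sum>i\<le>nn j. lam^(nn j-i) *\<^sub>R P' x (?D j i x)) - lam *\<^sub>R (\<Sum>i\<le>nn j. lam^(nn j-i) *\<^sub>R P x (?D j i x)) = 0"
        unfolding pencil_def dHpoly_def
        using biv_sum[OF bP x finite_atMost li, of "\<lambda>i. lam^(nn j - i)"]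
          biv_sum[OF bP' x finite_atMost li, of "\<lambda>i. lam^(nn j - i)"]
        by simp
    qed
    from coeff_extract[OF this] show ?thesis .
  qed
  have PB: "\<forall>l. l \<le> nn a \<longrightarrow> ?D a l x (P x (?D b m x)) = 0"
    if x: "x \<in> U" and a: "a \<in> {1..k}" and b: "b \<in> {1..k}" and m: "m \<le> nn b" for x a b m
    using m
  proof (induction m)
    case 0
    then show ?case using K[OF x b] lin[OF x a] by (simp add: linear_0)
  next
    case (Suc m)
    show ?case
    proof (intro allI impI)
      fix l assume l: "l \<le> nn a"
      have e1: "P x (?D b (Suc m) x) = P' x (?D b m x)" using K[OF x b] Suc.prems by simp
      have "?D a l x (P' x (?D b m x)) = - ?D b m x (P' x (?D a l x))"
        using skP'[OF x lin[OF x a l] lin[OF x b]] Suc.prems by simp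
      also have "\<dots> = 0"
      proof (cases "l = nn a")
        case True
        then show ?thesis using K[OF x a] lin[OF x b, of m] Suc.prems by (simp add: linear_0)
      next
        case False
        then have "P' x (?D a l x) = P x (?D a (Suc l) x)" using K[OF x a] l by simp
        moreover have "?D b m x (P x (?D a (Suc l) x)) = - ?D a (Suc l) x (P x (?D b m x))"
          using skP[OF x lin[OF x b] lin[OF x a]] Suc.prems l False by simp
        moreover have "?D a (Suc l) x (P x (?D b m x)) = 0" using Suc l False by simp
        ultimately show ?thesis by simp
      qed
      finally show "?D a l x (P x (?D b (Suc m) x)) = 0" using e1 by simp
    qed
  qed
  have P'B: "?D a l x (P' x (?D b m x)) = 0"
    if x: "x \<in> U" and a: "a \<in> {1..k}" and b: "b \<in> {1..k}" and m: "m \<le> nn b" and l: "l \<le> nn a" for x a b m l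
  proof (cases "m = nn b")
    case True
    then show ?thesis using K[OF x b] lin[OF x a l] by (simp add: linear_0)
  next
    case False
    then have "P' x (?D b m x) = P x (?D b (Suc m) x)" using K[OF x b] m by simp
    then show ?thesis using PB[OF x a b, of "Suc m"] m l False by simp
  qed
  have part1: "\<forall>p\<in>S. \<forall>\<alpha>. linear \<alpha> \<longrightarrow> (\<forall>b\<in>{1..k}. dfun (H b 0) p (Qbiv P' H Z k p \<alpha>) = 0)"
  proof (intro ballI allI impI)
    fix p and \<alpha> :: "'a \<Rightarrow> real" and b assume p: "p \<in> S" and la: "linear \<alpha>" and b: "b \<in> {1..k}"
    have x: "p \<in> U" using p S_def by auto
    have lb: "linear (?D b 0 p)" using lin[OF x b le0] .
    have "?D b 0 p (Qbiv P' H Z k p \<alpha>) = ?D b 0 p (P' p \<alpha>) +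
        (\<Sum>a=1..k. \<alpha> (P' p (?D a 0 p)) * ?D b 0 p (Z a p) - \<alpha> (Z a p) * ?D b 0 p (P' p (?D a 0 p)))"
      unfolding Qbiv_def using lb by (simp add: linear_add linear_sum linear_diff linear_scale)
    also have "\<dots> = ?D b 0 p (P' p \<alpha>) + (\<Sum>a=1..k. if a = b then \<alpha> (P' p (?D a 0 p)) else 0)"
    proof -
      have eq: "\<alpha> (P' p (?D a 0 p)) * ?D b 0 p (Z a p) - \<alpha> (Z a p) * ?D b 0 p (P' p (?D a 0 p))
          = (if a = b then \<alpha> (P' p (?D a 0 p)) else 0)" if a: "a \<in> {1..k}" for a
      proof -
        have z: "?D b 0 p (Z a p) = (if a = b then 1 else 0)" using Z_norm x b a by blast
        have q: "?D b 0 p (P' p (?D a 0 p)) = 0" using P'B[OF x b a le0 le0] .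
        show ?thesis unfolding z q by simp
      qed
      show ?thesis using eq by (intro arg_cong[where f="\<lambda>t. ?D b 0 p (P' p \<alpha>) + t"] sum.cong) auto
    qed
    also have "\<dots> = ?D b 0 p (P' p \<alpha>) + \<alpha> (P' p (?D b 0 p))" using b by simp
    also have "\<dots> = 0" using skP'[OF x lb la] by simp
    finally show "dfun (H b 0) p (Qbiv P' H Z k p \<alpha>) = 0" .
  qed
  have part2: "\<forall>x\<in>U. \<forall>a\<in>{1..k}. \<forall>b\<in>{1..k}. \<forall>l\<le>nn a. \<forall>m\<le>nn b.
            dfun (H a l) x (Qbiv P' H Z k x (dfun (H b m) x)) = 0"
  proof (intro ballI allI impI)
    fix x a b l m assume x: "x \<in> U" and a: "a \<in> {1..k}" and b: "b \<in> {1..k}" and l: "l \<le> nn a" and m: "m \<le> nn b"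
    have la: "linear (?D a l x)" using lin[OF x a l] .
    have "?D a l x (Qbiv P' H Z k x (?D b m x)) = ?D a l x (P' x (?D b m x)) +
        (\<Sum>c=1..k. ?D b m x (P' x (?D c 0 x)) * ?D a l x (Z c x) - ?D b m x (Z c x) * ?D a l x (P' x (?D c 0 x)))"
      unfolding Qbiv_def using la by (simp add: linear_add linear_sum linear_diff linear_scale)
    also have "\<dots> = 0"
      using P'B[OF x a b m l] P'B[OF x b _ le0 m] P'B[OF x a _ le0 l] by simp
    finally show "dfun (H a l) x (Qbiv P' H Z k x (dfun (H b m) x)) = 0" .
  qed
  show ?thesis using part1 part2 by blast
qed

end
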